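(* Let $(X,G)$ be an association scheme. Assume there exist $c,k,\ell\in\mathbb{N}$ and real numbers $0<\delta_1,\delta'_1,\delta'_2\leq 1$ with $1<\ell<(\delta_1^2/\delta'_1)\cdot k$ such that for all $g\in G$ with $g\neq 1$, \[\delta_1 k\leq n_g\leq \delta'_1 k \quad\text{and}\quad c(g)\leq \delta'_2 c.\] If $|G|\geq 2(\delta'_1/\delta_1)^3\delta'_2\cdot\frac{c}{\ell-1}+2$, then there exist relations $u,v,w,w'\in G\setminus\{1\}$ with $u\neq v$ and $w\neq w'$ such that $0<c^{w}_{u^{*}v}\leq c^{w'}_{u^{*}v}<\ell$.
   Context: An association scheme is a pair $(X,G)$ where $X$ is a finite set and $G$ is a partition of $X\times X$ such that (1) $G$ contains the identity relation $1:=\{(x,x)\mid x\in X\}$; (2) if $g\in G$ then $g^{*}:=\{(y,x)\mid (x,y)\in g\}\in G$; (3) for all $f,g,h\in G$ there is an integer $c^{h}_{fg}$ (intersection number) such that for all $(\alpha,\beta)\in h$, $c^{h}_{fg}=\#\{\gamma\in X\mid (\alpha,\gamma)\in f,\ (\gamma,\beta)\in g\}$. Elements of $G$ are called relations. For $g\in G$, its valency is $n_g:=c^{1}_{gg^{*}}$ and its indistinguishing number is $c(g):=\sum_{v\in G}c^{g}_{vv^{*}}$. *)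

theory Defs
  imports Complex_Main
begin

definition assoc_scheme :: "'a set \<Rightarrow> ('a \<times> 'a) set set \<Rightarrow> bool" where
  "assoc_scheme X G \<longleftrightarrow>
     finite X \<and>
     (\<forall>g\<in>G. g \<noteq> {} \<and> g \<subseteq> X \<times> X) \<and>
     (\<forall>g\<in>G. \<forall>h\<in>G. g \<noteq> h \<longrightarrow> g \<inter> h = {}) \<and>
     \<Union>G = X \<times> X \<and>
     Id_on X \<in> G \<and>
     (\<forall>g\<in>G. g\<inverse> \<in> G) \<and>
     (\<forall>f\<in>G. \<forall>g\<in>G. \<forall>h\<in>G. \<exists>c::nat. \<forall>(\<alpha>,\<beta>)\<in>h.
        card {\<gamma>\<in>X. (\<alpha>,\<gamma>) \<in> f \<and> (\<gamma>,\<beta>) \<in> g} = c)"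

text \<open>Intersection number c^h_{fg}: evaluated at some pair of h (well defined in a scheme).\<close>
definition inter_num :: "'a set \<Rightarrow> ('a \<times> 'a) set \<Rightarrow> ('a \<times> 'a) set \<Rightarrow> ('a \<times> 'a) set \<Rightarrow> nat" where
  "inter_num X f g h =
     (let p = (SOME p. p \<in> h) in card {\<gamma>\<in>X. (fst p,\<gamma>) \<in> f \<and> (\<gamma>,snd p) \<in> g})"

definition valency :: "'a set \<Rightarrow> ('a \<times> 'a) set \<Rightarrow> nat" where
  "valency X g = inter_num X g (g\<inverse>) (Id_on X)"

definition indist_num :: "'a set \<Rightarrow> ('a \<times> 'a) set set \<Rightarrow> ('a \<times> 'a) set \<Rightarrow> nat" where
  "indist_num X G g = (\<Sum>v\<in>G. inter_num X v (v\<inverse>) g)"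

end

theory Submission
  imports Defs
begin


lemma sch_D1:
  assumes "assoc_scheme X G"
  shows "finite X"
  using assms unfolding assoc_scheme_def by (elim conjE) assumption

lemma sch_D2:
  assumes "assoc_scheme X G"
  shows "\<forall>g\<in>G. g \<noteq> {} \<and> g \<subseteq> X \<times> X"
  using assms unfolding assoc_scheme_def by (elim conjE) assumption

lemma sch_D3:
  assumes "assoc_scheme X G"
  shows "\<forall>g\<in>G. \<forall>h\<in>G. g \<noteq> h \<longrightarrow> g \<inter> h = {}"
  using assms unfolding assoc_scheme_def by (elim conjE) assumption

lemma sch_D4:
  assumes "assoc_scheme X G"
  shows "\<Union>G = X \<times> X"
  using assms unfolding assoc_scheme_def by (elim conjE) assumption

lemma sch_D5:
  assumes "assoc_scheme X G"
  shows "Id_on X \<in> G"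
  using assms unfolding assoc_scheme_def by (elim conjE) assumption

lemma sch_D6:
  assumes "assoc_scheme X G"
  shows "\<forall>g\<in>G. g\<inverse> \<in> G"
  using assms unfolding assoc_scheme_def by (elim conjE) assumption

lemma sch_D7:
  assumes "assoc_scheme X G"
  shows "\<forall>f\<in>G. \<forall>g\<in>G. \<forall>h\<in>G. \<exists>c::nat. \<forall>(\<alpha>,\<beta>)\<in>h.
        card {\<gamma>\<in>X. (\<alpha>,\<gamma>) \<in> f \<and> (\<gamma>,\<beta>) \<in> g} = c"
  using assms unfolding assoc_scheme_def by (elim conjE) assumption

lemmas sch_D = sch_D1 sch_D2 sch_D3 sch_D4 sch_D5 sch_D6 sch_D7

lemma sch_finite: "assoc_scheme X G \<Longrightarrow> finite X"
  by (rule sch_D(1))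
lemma sch_sub: "assoc_scheme X G \<Longrightarrow> g \<in> G \<Longrightarrow> (x,y) \<in> g \<Longrightarrow> x \<in> X \<and> y \<in> X"
proof -
  assume s: "assoc_scheme X G" and "g \<in> G" "(x,y) \<in> g"
  then have "(x,y) \<in> X \<times> X" using sch_D(2)[OF s] by blast
  then show ?thesis by simp
qed
lemma sch_ne: "assoc_scheme X G \<Longrightarrow> g \<in> G \<Longrightarrow> g \<noteq> {}"
  using sch_D(2) by metis
lemma sch_uniq: "assoc_scheme X G \<Longrightarrow> g \<in> G \<Longrightarrow> h \<in> G \<Longrightarrow> (x,y) \<in> g \<Longrightarrow> (x,y) \<in> h \<Longrightarrow> g = h"
proof (rule ccontr)
  assume s: "assoc_scheme X G" and gh: "g \<in> G" "h \<in> G" "(x,y) \<in> g" "(x,y) \<in> h" "g \<noteq> h"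
  then have "g \<inter> h = {}" using sch_D(3)[OF s] by blast
  then show False using gh by blast
qed
lemma sch_ex: "assoc_scheme X G \<Longrightarrow> x \<in> X \<Longrightarrow> y \<in> X \<Longrightarrow> \<exists>g\<in>G. (x,y) \<in> g"
proof -
  assume s: "assoc_scheme X G" and "x \<in> X" "y \<in> X"
  then have "(x,y) \<in> \<Union>G" using sch_D(4)[OF s] by simp
  then show ?thesis by blast
qed
lemma sch_conv: "assoc_scheme X G \<Longrightarrow> g \<in> G \<Longrightarrow> g\<inverse> \<in> G"
  using sch_D(6) by blast
lemma sch_Id: "assoc_scheme X G \<Longrightarrow> Id_on X \<in> G"
  by (rule sch_D(5))
lemma sch_finG: "assoc_scheme X G \<Longrightarrow> finite G"
proof -
  assume s: "assoc_scheme X G"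
  have "G \<subseteq> Pow (X \<times> X)" using sch_D(2)[OF s] by blast
  moreover have "finite (Pow (X \<times> X))" using sch_D(1)[OF s] by simp
  ultimately show ?thesis by (rule finite_subset)
qed

lemma sch_inter:
  assumes s: "assoc_scheme X G" and f: "f \<in> G" and g: "g \<in> G" and h: "h \<in> G" and xy: "(x,y) \<in> h"
  shows "inter_num X f g h = card {\<gamma>\<in>X. (x,\<gamma>) \<in> f \<and> (\<gamma>,y) \<in> g}"
proof -
  obtain c :: nat where c: "\<forall>(\<alpha>,\<beta>)\<in>h. card {\<gamma>\<in>X. (\<alpha>,\<gamma>) \<in> f \<and> (\<gamma>,\<beta>) \<in> g} = c"
    using sch_D(7)[OF s] f g h by blast
  have "(SOME p. p \<in> h) \<in> h" using xy by (rule someI)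
  then have "card {\<gamma>\<in>X. (fst (SOME p. p \<in> h),\<gamma>) \<in> f \<and> (\<gamma>,snd (SOME p. p \<in> h)) \<in> g} = c"
    using c by (cases "(SOME p. p \<in> h)") auto
  moreover have "card {\<gamma>\<in>X. (x,\<gamma>) \<in> f \<and> (\<gamma>,y) \<in> g} = c" using c xy by auto
  ultimately show ?thesis unfolding inter_num_def Let_def by simp
qed

lemma sch_val:
  assumes s: "assoc_scheme X G" and g: "g \<in> G" and x: "x \<in> X"
  shows "valency X g = card {\<gamma>\<in>X. (x,\<gamma>) \<in> g}"
proof -
  have xx: "(x,x) \<in> Id_on X" using x by (rule Id_onI)
  have "valency X g = card {\<gamma>\<in>X. (x,\<gamma>) \<in> g \<and> (\<gamma>,x) \<in> g\<inverse>}"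
    unfolding valency_def using sch_inter[OF s g sch_conv[OF s g] sch_Id[OF s] xx] .
  then show ?thesis by simp
qed

lemma sch_indist:
  assumes s: "assoc_scheme X G" and g: "g \<in> G" and xy: "(x,y) \<in> g"
  shows "indist_num X G g = card {\<beta>\<in>X. \<exists>v\<in>G. (x,\<beta>) \<in> v \<and> (y,\<beta>) \<in> v}"
proof -
  have "indist_num X G g = (\<Sum>v\<in>G. card {\<beta>\<in>X. (x,\<beta>) \<in> v \<and> (y,\<beta>) \<in> v})"
    unfolding indist_num_def
    by (rule sum.cong) (auto simp: sch_inter[OF s _ sch_conv[OF s] g xy])
  also have "\<dots> = card (\<Union>v\<in>G. {\<beta>\<in>X. (x,\<beta>) \<in> v \<and> (y,\<beta>) \<in> v})"
  proof (rule card_UN_disjoint[symmetric])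
    show "finite G" using sch_finG[OF s] .
    show "\<forall>i\<in>G. finite {\<beta>\<in>X. (x,\<beta>) \<in> i \<and> (y,\<beta>) \<in> i}" using sch_finite[OF s] by auto
    show "\<forall>i\<in>G. \<forall>j\<in>G. i \<noteq> j \<longrightarrow> {\<beta>\<in>X. (x,\<beta>) \<in> i \<and> (y,\<beta>) \<in> i} \<inter> {\<beta>\<in>X. (x,\<beta>) \<in> j \<and> (y,\<beta>) \<in> j} = {}"
      using sch_uniq[OF s] by blast
  qed
  also have "(\<Union>v\<in>G. {\<beta>\<in>X. (x,\<beta>) \<in> v \<and> (y,\<beta>) \<in> v}) = {\<beta>\<in>X. \<exists>v\<in>G. (x,\<beta>) \<in> v \<and> (y,\<beta>) \<in> v}" by blast
  finally show ?thesis .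
qed



lemma card_filter_sum: "finite A \<Longrightarrow> card {x\<in>A. P x} = (\<Sum>x\<in>A. if P x then 1 else 0)"
proof -
  assume "finite A"
  moreover have "{x\<in>A. P x} = A \<inter> Collect P" by auto
  ultimately show ?thesis by (simp add: sum.If_cases)
qed

lemma sum_if_const: "finite A \<Longrightarrow> (\<Sum>x\<in>A. if P x then (c::nat) else 0) = c * card {x\<in>A. P x}"
proof -
  assume "finite A"
  moreover have "{x\<in>A. P x} = A \<inter> Collect P" by auto
  ultimately show ?thesis by (simp add: sum.If_cases)
qed

lemma card_offd:
  assumes "finite S"
  shows "card {(x,y). x\<in>S \<and> y\<in>S \<and> x\<noteq>y} = card S * (card S - 1)"
proof -
  have e: "S \<times> S = {(x,y). x\<in>S \<and> y\<in>S \<and> x\<noteq>y} \<union> (\<lambda>x. (x,x)) ` S" by auto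
  have d: "{(x,y). x\<in>S \<and> y\<in>S \<and> x\<noteq>y} \<inter> (\<lambda>x. (x,x)) ` S = {}" by auto
  have f: "finite {(x,y). x\<in>S \<and> y\<in>S \<and> x\<noteq>y}"
    by (rule finite_subset[of _ "S \<times> S"]) (use assms in auto)
  have ci: "card ((\<lambda>x. (x,x)) ` S) = card S" by (rule card_image) (auto simp: inj_on_def)
  have fi: "finite ((\<lambda>x. (x,x)) ` S)" using assms by simp
  have "card S * card S = card (S \<times> S)" by (simp add: card_cartesian_product)
  also have "\<dots> = card ({(x,y). x\<in>S \<and> y\<in>S \<and> x\<noteq>y} \<union> (\<lambda>x. (x,x)) ` S)" using e by simp
  also have "\<dots> = card {(x,y). x\<in>S \<and> y\<in>S \<and> x\<noteq>y} + card ((\<lambda>x. (x,x)) ` S)"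
    by (rule card_Un_disjoint[OF f fi d])
  finally have "card S * card S = card {(x,y). x\<in>S \<and> y\<in>S \<and> x\<noteq>y} + card S" using ci by simp
  then show ?thesis by (simp add: diff_mult_distrib2)
qed

lemma arith_L:
  fixes L d1 d1' k l :: real
  assumes "0 < d1" "d1 \<le> d1'" "0 < k" "1 < l"
    and "L \<ge> d1^2 * k^2 - (l - 1) * d1' * k" and "L \<ge> d1 * k * l"
  shows "L \<ge> d1^3 * k^2 / (2 * d1')"
proof (cases "(l - 1) * d1' * k \<le> d1^2 * k^2 / 2")
  case True
  have "d1^3 * k^2 / (2 * d1') \<le> d1^2 * k^2 / 2"
  proof -
    have "d1^3 * k^2 = (d1^2*k^2) * d1" by (simp add: power3_eq_cube power2_eq_square)
    also have "\<dots> \<le> (d1^2*k^2) * d1'" using assms by (intro mult_left_mono) auto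
    finally have "d1^3 * k^2 \<le> (d1^2*k^2) * d1'" .
    then show ?thesis using assms by (simp add: divide_simps)
  qed
  then show ?thesis using True assms by linarith
next
  case False
  then have h: "d1^2 * k^2 < 2 * ((l - 1) * d1' * k)" by linarith
  have "d1^3 * k^2 = d1 * (d1^2*k^2)" by (simp add: power3_eq_cube power2_eq_square)
  also have "\<dots> < d1 * (2 * ((l - 1) * d1' * k))" using h assms by simp
  finally have "d1^3 * k^2 / (2 * d1') < d1 * k * (l - 1)" using assms by (simp add: divide_simps) (simp add: algebra_simps)
  also have "\<dots> \<le> d1 * k * l" using assms by simp
  finally show ?thesis using assms by linarith
qed



lemma final_arith:
  fixes N D Lm OD na k c p q r :: real
  assumes "0 < Lm" "D \<ge> p^3 * k^2 / (2 * q)" "Lm * N \<ge> 2 * (q / p) ^ 3 * r * c"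
    "Lm * N * D + OD \<le> OD * (r * c)" "0 < OD" "OD \<le> na^2" "na \<le> q * k" "0 \<le> na"
    "0 < p" "0 < q" "0 < r" "0 \<le> c" "0 < k" "0 \<le> N"
  shows False
proof -
  have D0: "0 \<le> p^3 * k^2 / (2 * q)" using assms by simp
  have e: "2 * (q / p) ^ 3 * r * c * (p^3 * k^2 / (2 * q)) = q^2 * k^2 * (r * c)"
    using assms by (simp add: field_simps power3_eq_cube power2_eq_square)
  have i: "2 * (q / p) ^ 3 * r * c * (p^3 * k^2 / (2 * q)) \<le> Lm * N * D"
    by (rule mult_mono) (use assms D0 in \<open>auto simp: zero_le_mult_iff\<close>)
  have a: "q^2 * k^2 * (r * c) \<le> Lm * N * D" using e i by simp
  have "na^2 \<le> (q * k)^2" using assms by (intro power_mono) auto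
  then have "OD \<le> q^2 * k^2" using assms by (simp add: power_mult_distrib)
  then have "OD * (r * c) \<le> q^2 * k^2 * (r * c)" using assms by (intro mult_right_mono) auto
  then show False using a assms by linarith
qed

theorem theorem1p3:
  fixes X :: "'a set" and G :: "('a \<times> 'a) set set"
    and c k l :: nat and \<delta>\<^sub>1 \<delta>'\<^sub>1 \<delta>'\<^sub>2 :: real
  assumes scheme: "assoc_scheme X G"
    and d1: "0 < \<delta>\<^sub>1" "\<delta>\<^sub>1 \<le> 1"
    and d1': "0 < \<delta>'\<^sub>1" "\<delta>'\<^sub>1 \<le> 1"
    and d2': "0 < \<delta>'\<^sub>2" "\<delta>'\<^sub>2 \<le> 1"
    and l_gt: "1 < l"
    and l_lt: "real l < (\<delta>\<^sub>1 ^ 2 / \<delta>'\<^sub>1) * real k"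
    and val: "\<And>g. g \<in> G \<Longrightarrow> g \<noteq> Id_on X \<Longrightarrow>
                \<delta>\<^sub>1 * real k \<le> real (valency X g) \<and> real (valency X g) \<le> \<delta>'\<^sub>1 * real k"
    and ind: "\<And>g. g \<in> G \<Longrightarrow> g \<noteq> Id_on X \<Longrightarrow> real (indist_num X G g) \<le> \<delta>'\<^sub>2 * real c"
    and cardG: "real (card G) \<ge> 2 * (\<delta>'\<^sub>1 / \<delta>\<^sub>1) ^ 3 * \<delta>'\<^sub>2 * (real c / (real l - 1)) + 2"
  shows "\<exists>u\<in>G - {Id_on X}. \<exists>v\<in>G - {Id_on X}. \<exists>w\<in>G - {Id_on X}. \<exists>w'\<in>G - {Id_on X}.
           u \<noteq> v \<and> w \<noteq> w' \<and>
           0 < inter_num X (u\<inverse>) v w \<and>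
           inter_num X (u\<inverse>) v w \<le> inter_num X (u\<inverse>) v w' \<and>
           inter_num X (u\<inverse>) v w' < l"
proof (rule ccontr)
  assume H: "\<not> ?thesis"
  note s = scheme
  have finX: "finite X" using sch_finite[OF s] .
  have finG: "finite G" using sch_finG[OF s] .
  have IdG: "Id_on X \<in> G" using sch_Id[OF s] .
  have lr: "real l > 1" using l_gt by simp
  have kpos: "real k > 0"
  proof -
    have "0 < (\<delta>\<^sub>1 ^ 2 / \<delta>'\<^sub>1) * real k" using l_lt lr by linarith
    moreover have "0 < \<delta>\<^sub>1 ^ 2 / \<delta>'\<^sub>1" using d1 d1' by simp
    ultimately show ?thesis using zero_less_mult_pos by blast
  qed
  have rhs0: "0 \<le> 2 * (\<delta>'\<^sub>1 / \<delta>\<^sub>1) ^ 3 * \<delta>'\<^sub>2 * (real c / (real l - 1))"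
    using d1 d1' d2' lr by simp
  have cG2: "card G \<ge> 2" using cardG rhs0 by linarith
  obtain a where aG: "a \<in> G" and aI: "a \<noteq> Id_on X"
  proof -
    have "\<not> G \<subseteq> {Id_on X}"
    proof
      assume "G \<subseteq> {Id_on X}"
      then have "card G \<le> 1" using card_mono[of "{Id_on X}" G] by simp
      then show False using cG2 by simp
    qed
    then show ?thesis using that by blast
  qed
  obtain \<alpha> where \<alpha>X: "\<alpha> \<in> X"
    using sch_ne[OF s IdG] by auto
  have a'G: "a\<inverse> \<in> G" using sch_conv[OF s aG] .
  have a'I: "a\<inverse> \<noteq> Id_on X"
  proof
    assume "a\<inverse> = Id_on X"
    then have "a = (Id_on X)\<inverse>" by (metis converse_converse)
    then show False using aI by simp
  qed
  have vala: "\<delta>\<^sub>1 * real k \<le> real (valency X a)" "real (valency X a) \<le> \<delta>'\<^sub>1 * real k"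
    using val[OF aG aI] by auto
  have dd: "\<delta>\<^sub>1 \<le> \<delta>'\<^sub>1"
  proof -
    have "\<delta>\<^sub>1 * real k \<le> \<delta>'\<^sub>1 * real k" using vala by linarith
    then show ?thesis using kpos by simp
  qed
  define U where "U = {\<gamma>\<in>X. (\<alpha>,\<gamma>) \<in> a}"
  define na where "na = card U"
  have na_val: "na = valency X a" unfolding na_def U_def using sch_val[OF s aG \<alpha>X] by simp
  define S where "S (v::('a\<times>'a) set) (\<beta>::'a) = {\<gamma>\<in>X. (\<alpha>,\<gamma>) \<in> a \<and> (\<gamma>,\<beta>) \<in> v}" for v \<beta>
  define m where "m (v::('a\<times>'a) set) (\<beta>::'a) = card (S v \<beta>)" for v \<beta>
  define G' where "G' = G - {Id_on X, a\<inverse>}"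
  define Large where "Large v = {\<beta>\<in>X. l \<le> m v \<beta>}" for v
  define Small where "Small v = {\<beta>\<in>X. 0 < m v \<beta> \<and> m v \<beta> < l}" for v
  have finS: "finite (S v \<beta>)" for v \<beta> unfolding S_def using finX by simp
  have link: "inter_num X ((a\<inverse>)\<inverse>) v w = m v \<beta>" if "v \<in> G" "w \<in> G" "(\<alpha>,\<beta>) \<in> w" for v w \<beta>
    unfolding m_def S_def using sch_inter[OF s aG that] by simp
  have m\<alpha>: "m v \<alpha> = 0" if "v \<in> G'" for v
  proof -
    have "S v \<alpha> = {}"
    proof (rule ccontr)
      assume "S v \<alpha> \<noteq> {}"
      then obtain \<gamma> where "(\<alpha>,\<gamma>) \<in> a" "(\<gamma>,\<alpha>) \<in> v" unfolding S_def by auto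
      then have "(\<alpha>,\<gamma>) \<in> v\<inverse>" by simp
      then have "v\<inverse> = a" using sch_uniq[OF s sch_conv[OF s] aG] that \<open>(\<alpha>,\<gamma>) \<in> a\<close>
        unfolding G'_def by blast
      then have "v = a\<inverse>" by auto
      then show False using that unfolding G'_def by simp
    qed
    then show ?thesis unfolding m_def by simp
  qed
  have \<alpha>L: "\<alpha> \<notin> Large v" if "v \<in> G'" for v
    using m\<alpha>[OF that] l_gt unfolding Large_def by simp
  have \<alpha>S: "\<alpha> \<notin> Small v" if "v \<in> G'" for v
    using m\<alpha>[OF that] unfolding Small_def by simp
  have row: "(\<Sum>\<beta>\<in>X. m v \<beta>) = na * valency X v" if vG: "v \<in> G" for v
  proof -
    have "(\<Sum>\<beta>\<in>X. m v \<beta>) = (\<Sum>\<beta>\<in>X. \<Sum>\<gamma>\<in>X. if (\<alpha>,\<gamma>) \<in> a \<and> (\<gamma>,\<beta>) \<in> v then 1 else 0)"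
      unfolding m_def S_def using card_filter_sum[OF finX] by simp
    also have "\<dots> = (\<Sum>\<gamma>\<in>X. \<Sum>\<beta>\<in>X. if (\<alpha>,\<gamma>) \<in> a \<and> (\<gamma>,\<beta>) \<in> v then 1 else 0)"
      by (rule sum.swap)
    also have "\<dots> = (\<Sum>\<gamma>\<in>X. if (\<alpha>,\<gamma>) \<in> a then valency X v else 0)"
    proof (rule sum.cong)
      fix \<gamma> assume g: "\<gamma> \<in> X"
      show "(\<Sum>\<beta>\<in>X. if (\<alpha>,\<gamma>) \<in> a \<and> (\<gamma>,\<beta>) \<in> v then 1 else 0) = (if (\<alpha>,\<gamma>) \<in> a then valency X v else 0)"
        using card_filter_sum[OF finX, of "\<lambda>\<beta>. (\<gamma>,\<beta>) \<in> v"] sch_val[OF s vG g] by auto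
    qed simp
    also have "\<dots> = valency X v * na" unfolding na_def U_def using sum_if_const[OF finX] by simp
    finally show ?thesis by simp
  qed
  have small: "real (card (Small v)) \<le> \<delta>'\<^sub>1 * real k" if vG': "v \<in> G'" for v
  proof (cases "Small v = {}")
    case True then show ?thesis using d1' kpos by simp
  next
    case False
    then obtain \<beta>0 where b0: "\<beta>0 \<in> Small v" by blast
    have vG: "v \<in> G" using vG' unfolding G'_def by simp
    have b0X: "\<beta>0 \<in> X" using b0 unfolding Small_def by simp
    obtain w0 where w0G: "w0 \<in> G" and w0: "(\<alpha>,\<beta>0) \<in> w0" using sch_ex[OF s \<alpha>X b0X] by blast
    have w0I: "w0 \<noteq> Id_on X"
    proof
      assume "w0 = Id_on X"
      then have "\<beta>0 = \<alpha>" using w0 by auto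
      then show False using b0 \<alpha>S[OF vG'] by simp
    qed
    have sub: "Small v \<subseteq> {\<beta>\<in>X. (\<alpha>,\<beta>) \<in> w0}"
    proof
      fix \<beta> assume b: "\<beta> \<in> Small v"
      have bX: "\<beta> \<in> X" using b unfolding Small_def by simp
      obtain w where wG: "w \<in> G" and w: "(\<alpha>,\<beta>) \<in> w" using sch_ex[OF s \<alpha>X bX] by blast
      have wI: "w \<noteq> Id_on X"
      proof
        assume "w = Id_on X"
        then have "\<beta> = \<alpha>" using w by auto
        then show False using b \<alpha>S[OF vG'] by simp
      qed
      have "w = w0"
      proof (rule ccontr)
        assume ne: "w \<noteq> w0"
        have i1: "inter_num X ((a\<inverse>)\<inverse>) v w = m v \<beta>" using link[OF vG wG w] .
        have i0: "inter_num X ((a\<inverse>)\<inverse>) v w0 = m v \<beta>0" using link[OF vG w0G w0] .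
        have uv: "a\<inverse> \<noteq> v" using vG' unfolding G'_def by auto
        have uG: "a\<inverse> \<in> G - {Id_on X}" using a'G a'I by simp
        have vG2: "v \<in> G - {Id_on X}" using vG' unfolding G'_def by simp
        have wG2: "w \<in> G - {Id_on X}" "w0 \<in> G - {Id_on X}" using wG wI w0G w0I by auto
        have mb: "0 < m v \<beta>" "m v \<beta> < l" using b unfolding Small_def by auto
        have mb0: "0 < m v \<beta>0" "m v \<beta>0 < l" using b0 unfolding Small_def by auto
        have ex: "\<exists>u\<in>G - {Id_on X}. \<exists>v\<in>G - {Id_on X}. \<exists>w\<in>G - {Id_on X}. \<exists>w'\<in>G - {Id_on X}.
           u \<noteq> v \<and> w \<noteq> w' \<and>
           0 < inter_num X (u\<inverse>) v w \<and>
           inter_num X (u\<inverse>) v w \<le> inter_num X (u\<inverse>) v w' \<and>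
           inter_num X (u\<inverse>) v w' < l"
        proof (cases "m v \<beta> \<le> m v \<beta>0")
          case True
          show ?thesis
            apply (rule bexI[where x="a\<inverse>", OF _ uG])
            apply (rule bexI[where x=v, OF _ vG2])
            apply (rule bexI[where x=w, OF _ wG2(1)])
            apply (rule bexI[where x=w0, OF _ wG2(2)])
            using uv ne i1 i0 mb mb0 True by simp
        next
          case False
          show ?thesis
            apply (rule bexI[where x="a\<inverse>", OF _ uG])
            apply (rule bexI[where x=v, OF _ vG2])
            apply (rule bexI[where x=w0, OF _ wG2(2)])
            apply (rule bexI[where x=w, OF _ wG2(1)])
            using uv ne i1 i0 mb mb0 False by simp
        qed
        show False using H ex by (rule notE)
      qed
      then show "\<beta> \<in> {\<beta>\<in>X. (\<alpha>,\<beta>) \<in> w0}" using w bX by simp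
    qed
    have "card (Small v) \<le> card {\<beta>\<in>X. (\<alpha>,\<beta>) \<in> w0}" using card_mono[OF _ sub] finX by simp
    also have "\<dots> = valency X w0" using sch_val[OF s w0G \<alpha>X] by simp
    finally show ?thesis using val[OF w0G w0I] by linarith
  qed
  have large: "real (\<Sum>\<beta>\<in>Large v. m v \<beta>) \<ge> \<delta>\<^sub>1^3 * (real k)^2 / (2 * \<delta>'\<^sub>1)" if vG': "v \<in> G'" for v
  proof -
    have vG: "v \<in> G" and vI: "v \<noteq> Id_on X" using vG' unfolding G'_def by auto
    have finL: "finite (Large v)" unfolding Large_def using finX by simp
    have LX: "Large v \<subseteq> X" unfolding Large_def by auto
    have split: "(\<Sum>\<beta>\<in>X. m v \<beta>) = (\<Sum>\<beta>\<in>Large v. m v \<beta>) + (\<Sum>\<beta>\<in>X - Large v. m v \<beta>)"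
      using sum.subset_diff[OF LX finX, of "m v"] by (simp add: add.commute)
    have "(\<Sum>\<beta>\<in>X - Large v. m v \<beta>) = (\<Sum>\<beta>\<in>Small v. m v \<beta>)"
    proof (rule sum.mono_neutral_cong_right)
      show "finite (X - Large v)" using finX by simp
      show "Small v \<subseteq> X - Large v" unfolding Small_def Large_def by auto
      show "\<forall>i\<in>X - Large v - Small v. m v i = 0" unfolding Small_def Large_def by auto
    qed simp
    also have "\<dots> \<le> card (Small v) * (l - 1)"
      using sum_bounded_above[of "Small v" "m v" "l - 1"] by (force simp: Small_def)
    finally have sm0: "real (\<Sum>\<beta>\<in>X - Large v. m v \<beta>) \<le> real (card (Small v) * (l - 1))"
      by (simp only: of_nat_le_iff)
    have L1': "real (l - 1) = real l - 1" using l_gt by (simp add: of_nat_diff)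
    have sm: "real (\<Sum>\<beta>\<in>X - Large v. m v \<beta>) \<le> real (card (Small v)) * (real l - 1)"
      using sm0 unfolding of_nat_mult L1' .
    have rowv: "real (\<Sum>\<beta>\<in>X. m v \<beta>) = real na * real (valency X v)" using row[OF vG] by simp
    have nn: "\<delta>\<^sub>1^2 * (real k)^2 \<le> real na * real (valency X v)"
    proof -
      have "\<delta>\<^sub>1^2 * (real k)^2 = (\<delta>\<^sub>1 * real k) * (\<delta>\<^sub>1 * real k)" by (simp add: power2_eq_square)
      also have "\<dots> \<le> real na * real (valency X v)"
        using vala val[OF vG vI] na_val d1 kpos by (intro mult_mono) auto
      finally show ?thesis .
    qed
    have sc: "real (card (Small v)) * (real l - 1) \<le> (real l - 1) * \<delta>'\<^sub>1 * real k"
      using small[OF vG'] lr by (simp add: mult.commute mult_right_mono)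
    have A: "real (\<Sum>\<beta>\<in>Large v. m v \<beta>) \<ge> \<delta>\<^sub>1^2 * (real k)^2 - (real l - 1) * \<delta>'\<^sub>1 * real k"
    proof -
      have "real (\<Sum>\<beta>\<in>X. m v \<beta>) = real (\<Sum>\<beta>\<in>Large v. m v \<beta>) + real (\<Sum>\<beta>\<in>X - Large v. m v \<beta>)"
        using split by simp
      then show ?thesis using rowv nn sm sc by linarith
    qed
    have lk: "(real l - 1) * \<delta>'\<^sub>1 * real k < \<delta>\<^sub>1^2 * (real k)^2"
    proof -
      have "real l * \<delta>'\<^sub>1 < \<delta>\<^sub>1^2 * real k" using l_lt d1' by (simp add: field_simps)
      then have "real l * \<delta>'\<^sub>1 * real k < \<delta>\<^sub>1^2 * real k * real k" using kpos by simp
      moreover have "(real l - 1) * \<delta>'\<^sub>1 * real k \<le> real l * \<delta>'\<^sub>1 * real k"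
        using d1' kpos by (simp add: algebra_simps)
      moreover have "\<delta>\<^sub>1^2 * real k * real k = \<delta>\<^sub>1^2 * (real k)^2" by (simp add: power2_eq_square)
      ultimately show ?thesis by linarith
    qed
    have "Large v \<noteq> {}"
    proof
      assume "Large v = {}"
      then show False using A lk by simp
    qed
    then obtain \<beta>1 where b1: "\<beta>1 \<in> Large v" by blast
    have b1X: "\<beta>1 \<in> X" using b1 unfolding Large_def by simp
    obtain w1 where w1G: "w1 \<in> G" and w1: "(\<alpha>,\<beta>1) \<in> w1" using sch_ex[OF s \<alpha>X b1X] by blast
    have w1I: "w1 \<noteq> Id_on X"
    proof
      assume "w1 = Id_on X"
      then have "\<beta>1 = \<alpha>" using w1 by auto
      then show False using b1 \<alpha>L[OF vG'] by simp
    qed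
    have Osub: "{\<beta>\<in>X. (\<alpha>,\<beta>) \<in> w1} \<subseteq> Large v"
    proof
      fix \<beta> assume "\<beta> \<in> {\<beta>\<in>X. (\<alpha>,\<beta>) \<in> w1}"
      then have bX: "\<beta> \<in> X" and bw: "(\<alpha>,\<beta>) \<in> w1" by auto
      have "m v \<beta> = m v \<beta>1" using link[OF vG w1G bw] link[OF vG w1G w1] by simp
      then show "\<beta> \<in> Large v" using b1 bX unfolding Large_def by simp
    qed
    have "l * card {\<beta>\<in>X. (\<alpha>,\<beta>) \<in> w1} \<le> (\<Sum>\<beta>\<in>{\<beta>\<in>X. (\<alpha>,\<beta>) \<in> w1}. m v \<beta>)"
    proof -
      have "card {\<beta>\<in>X. (\<alpha>,\<beta>) \<in> w1} * l \<le> (\<Sum>\<beta>\<in>{\<beta>\<in>X. (\<alpha>,\<beta>) \<in> w1}. m v \<beta>)"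
        using sum_bounded_below[of "{\<beta>\<in>X. (\<alpha>,\<beta>) \<in> w1}" l "m v"] Osub
        unfolding Large_def by force
      then show ?thesis by (simp add: mult.commute)
    qed
    also have "\<dots> \<le> (\<Sum>\<beta>\<in>Large v. m v \<beta>)"
      by (rule sum_mono2[OF finL Osub]) simp
    finally have "l * valency X w1 \<le> (\<Sum>\<beta>\<in>Large v. m v \<beta>)" using sch_val[OF s w1G \<alpha>X] by simp
    then have "real l * real (valency X w1) \<le> real (\<Sum>\<beta>\<in>Large v. m v \<beta>)"
      by (metis of_nat_le_iff of_nat_mult)
    moreover have "\<delta>\<^sub>1 * real k * real l \<le> real l * real (valency X w1)"
      using val[OF w1G w1I] lr by (simp add: mult.commute mult_left_mono)
    ultimately have B: "real (\<Sum>\<beta>\<in>Large v. m v \<beta>) \<ge> \<delta>\<^sub>1 * real k * real l" by linarith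
    show ?thesis using arith_L[OF d1(1) dd kpos lr A B] .
  qed
  define OD where "OD = {(x,y). x\<in>U \<and> y\<in>U \<and> x\<noteq>y}"
  define Pc where "Pc v \<beta> = (\<lambda>p. (\<beta>,p)) ` {(x,y). x\<in>S v \<beta> \<and> y\<in>S v \<beta> \<and> x\<noteq>y}" for v \<beta>
  define P0 where "P0 = (\<lambda>p. (\<alpha>,p)) ` OD"
  define T where "T = {(\<beta>,x,y). \<beta>\<in>X \<and> x\<in>U \<and> y\<in>U \<and> x\<noteq>y \<and> (\<exists>v\<in>G. (x,\<beta>)\<in>v \<and> (y,\<beta>)\<in>v)}"
  have finU: "finite U" unfolding U_def using finX by simp
  have finT: "finite T"
    by (rule finite_subset[of _ "X \<times> U \<times> U"]) (use finX finU in \<open>auto simp: T_def\<close>)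
  have cardPc: "card (Pc v \<beta>) = m v \<beta> * (m v \<beta> - 1)" for v \<beta>
  proof -
    have "card (Pc v \<beta>) = card {(x,y). x\<in>S v \<beta> \<and> y\<in>S v \<beta> \<and> x\<noteq>y}"
      unfolding Pc_def by (rule card_image) (auto simp: inj_on_def)
    then show ?thesis unfolding m_def using card_offd[OF finS] by simp
  qed
  have cardOD: "card OD = na * (na - 1)" unfolding OD_def na_def using card_offd[OF finU] .
  have cardP0: "card P0 = card OD" unfolding P0_def by (rule card_image) (auto simp: inj_on_def)
  have finPc: "finite (Pc v \<beta>)" for v \<beta>
  proof -
    have "finite {(x,y). x\<in>S v \<beta> \<and> y\<in>S v \<beta> \<and> x\<noteq>y}"
      by (rule finite_subset[of _ "S v \<beta> \<times> S v \<beta>"]) (use finS in auto)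
    then show ?thesis unfolding Pc_def by simp
  qed
  have finG': "finite G'" unfolding G'_def using finG by simp
  have finLg: "finite (Large v)" for v unfolding Large_def using finX by simp
  have UNc: "card (\<Union>v\<in>G'. \<Union>\<beta>\<in>Large v. Pc v \<beta>) = (\<Sum>v\<in>G'. \<Sum>\<beta>\<in>Large v. card (Pc v \<beta>))"
  proof -
    have "card (\<Union>v\<in>G'. \<Union>\<beta>\<in>Large v. Pc v \<beta>) = (\<Sum>v\<in>G'. card (\<Union>\<beta>\<in>Large v. Pc v \<beta>))"
    proof (rule card_UN_disjoint)
      show "finite G'" by (rule finG')
      show "\<forall>i\<in>G'. finite (\<Union>\<beta>\<in>Large i. Pc i \<beta>)" using finLg finPc by blast
      show "\<forall>i\<in>G'. \<forall>j\<in>G'. i \<noteq> j \<longrightarrow> (\<Union>\<beta>\<in>Large i. Pc i \<beta>) \<inter> (\<Union>\<beta>\<in>Large j. Pc j \<beta>) = {}"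
      proof (intro ballI impI)
        fix i j assume i: "i \<in> G'" and j: "j \<in> G'" and ij: "i \<noteq> j"
        show "(\<Union>\<beta>\<in>Large i. Pc i \<beta>) \<inter> (\<Union>\<beta>\<in>Large j. Pc j \<beta>) = {}"
        proof (rule ccontr)
          assume "(\<Union>\<beta>\<in>Large i. Pc i \<beta>) \<inter> (\<Union>\<beta>\<in>Large j. Pc j \<beta>) \<noteq> {}"
          then obtain \<beta> x where "(x,\<beta>) \<in> i" "(x,\<beta>) \<in> j"
            unfolding Pc_def S_def by blast
          then show False using sch_uniq[OF s] i j ij unfolding G'_def by blast
        qed
      qed
    qed
    also have "\<dots> = (\<Sum>v\<in>G'. \<Sum>\<beta>\<in>Large v. card (Pc v \<beta>))"
    proof (rule sum.cong[OF refl], rule card_UN_disjoint)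
      fix v assume "v \<in> G'"
      show "finite (Large v)" by (rule finLg)
      show "\<forall>i\<in>Large v. finite (Pc v i)" using finPc by blast
      show "\<forall>i\<in>Large v. \<forall>j\<in>Large v. i \<noteq> j \<longrightarrow> Pc v i \<inter> Pc v j = {}"
        unfolding Pc_def by blast
    qed
    finally show ?thesis .
  qed
  have lower: "card OD + (\<Sum>v\<in>G'. \<Sum>\<beta>\<in>Large v. m v \<beta> * (m v \<beta> - 1)) \<le> card T"
  proof -
    have disj: "P0 \<inter> (\<Union>v\<in>G'. \<Union>\<beta>\<in>Large v. Pc v \<beta>) = {}"
      unfolding P0_def Pc_def using \<alpha>L by blast
    have finUN: "finite (\<Union>v\<in>G'. \<Union>\<beta>\<in>Large v. Pc v \<beta>)" using finG' finLg finPc by blast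
    have finP0: "finite P0" unfolding P0_def OD_def
      by (rule finite_imageI, rule finite_subset[of _ "U \<times> U"]) (use finU in auto)
    have sub: "P0 \<union> (\<Union>v\<in>G'. \<Union>\<beta>\<in>Large v. Pc v \<beta>) \<subseteq> T"
    proof
      fix t assume t: "t \<in> P0 \<union> (\<Union>v\<in>G'. \<Union>\<beta>\<in>Large v. Pc v \<beta>)"
      show "t \<in> T"
      proof (cases "t \<in> P0")
        case True
        then obtain x y where t: "t = (\<alpha>,x,y)" and xy: "x\<in>U" "y\<in>U" "x\<noteq>y" unfolding P0_def OD_def by auto
        have "(x,\<alpha>) \<in> a\<inverse>" "(y,\<alpha>) \<in> a\<inverse>" using xy unfolding U_def by auto
        then show ?thesis using t xy \<alpha>X a'G unfolding T_def by blast
      next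
        case False
        then obtain v \<beta> where v: "v \<in> G'" and b: "\<beta> \<in> Large v" and tP: "t \<in> Pc v \<beta>" using t by blast
        then obtain x y where tt: "t = (\<beta>,x,y)" and xy: "x \<in> S v \<beta>" "y \<in> S v \<beta>" "x \<noteq> y"
          unfolding Pc_def by auto
        have "v \<in> G" using v unfolding G'_def by simp
        moreover have "\<beta> \<in> X" using b unfolding Large_def by simp
        ultimately show ?thesis using tt xy unfolding T_def S_def U_def by blast
      qed
    qed
    have "card OD + (\<Sum>v\<in>G'. \<Sum>\<beta>\<in>Large v. m v \<beta> * (m v \<beta> - 1))
        = card (P0 \<union> (\<Union>v\<in>G'. \<Union>\<beta>\<in>Large v. Pc v \<beta>))"
      using card_Un_disjoint[OF finP0 finUN disj] UNc cardP0 cardPc by simp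
    also have "\<dots> \<le> card T" by (rule card_mono[OF finT sub])
    finally show ?thesis .
  qed
  define B where "B p = {\<beta>\<in>X. \<exists>v\<in>G. (fst p,\<beta>) \<in> v \<and> (snd p,\<beta>) \<in> v}" for p
  have finOD: "finite OD" unfolding OD_def
    by (rule finite_subset[of _ "U \<times> U"]) (use finU in auto)
  have upper: "real (card T) \<le> real (card OD) * (\<delta>'\<^sub>2 * real c)"
  proof -
    have sub: "T \<subseteq> (\<Union>p\<in>OD. (\<lambda>\<beta>. (\<beta>,p)) ` B p)"
      unfolding T_def OD_def B_def by force
    have "card T \<le> card (\<Union>p\<in>OD. (\<lambda>\<beta>. (\<beta>,p)) ` B p)"
      by (rule card_mono[OF _ sub]) (use finOD finX in \<open>auto simp: B_def\<close>)
    also have "\<dots> \<le> (\<Sum>p\<in>OD. card ((\<lambda>\<beta>. (\<beta>,p)) ` B p))" by (rule card_UN_le[OF finOD])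
    also have "\<dots> \<le> (\<Sum>p\<in>OD. card (B p))" by (intro sum_mono card_image_le) (simp add: B_def finX)
    finally have "real (card T) \<le> (\<Sum>p\<in>OD. real (card (B p)))" by (metis of_nat_le_iff of_nat_sum)
    also have "\<dots> \<le> (\<Sum>p\<in>OD. \<delta>'\<^sub>2 * real c)"
    proof (rule sum_mono)
      fix p assume p: "p \<in> OD"
      then obtain x y where pxy: "p = (x,y)" and x: "x \<in> X" and y: "y \<in> X" and xy: "x \<noteq> y"
        unfolding OD_def U_def by auto
      obtain g where gG: "g \<in> G" and g: "(x,y) \<in> g" using sch_ex[OF s x y] by blast
      have gI: "g \<noteq> Id_on X" using g xy by auto
      have "card (B p) = indist_num X G g" using sch_indist[OF s gG g] unfolding B_def pxy by simp
      then show "real (card (B p)) \<le> \<delta>'\<^sub>2 * real c" using ind[OF gG gI] by simp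
    qed
    finally show ?thesis by simp
  qed
  have per_v: "(l - 1) * (\<Sum>\<beta>\<in>Large v. m v \<beta>) \<le> (\<Sum>\<beta>\<in>Large v. m v \<beta> * (m v \<beta> - 1))" for v
    unfolding sum_distrib_left
  proof (rule sum_mono)
    fix \<beta> assume "\<beta> \<in> Large v"
    then have "l \<le> m v \<beta>" unfolding Large_def by simp
    then have "l - 1 \<le> m v \<beta> - 1" by (rule diff_le_mono)
    then show "(l - 1) * m v \<beta> \<le> m v \<beta> * (m v \<beta> - 1)" by (simp add: mult.commute)
  qed
  have Q: "(l - 1) * (\<Sum>v\<in>G'. \<Sum>\<beta>\<in>Large v. m v \<beta>) \<le> (\<Sum>v\<in>G'. \<Sum>\<beta>\<in>Large v. m v \<beta> * (m v \<beta> - 1))"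
  proof -
    have "(l - 1) * (\<Sum>v\<in>G'. \<Sum>\<beta>\<in>Large v. m v \<beta>) = (\<Sum>v\<in>G'. (l - 1) * (\<Sum>\<beta>\<in>Large v. m v \<beta>))"
      by (rule sum_distrib_left)
    also have "\<dots> \<le> (\<Sum>v\<in>G'. \<Sum>\<beta>\<in>Large v. m v \<beta> * (m v \<beta> - 1))"
      by (rule sum_mono) (rule per_v)
    finally show ?thesis .
  qed
  have cardG': "real (card G') = real (card G) - 2"
  proof -
    have "card G' = card G - card {Id_on X, a\<inverse>}" unfolding G'_def
      by (rule card_Diff_subset) (use IdG a'G in auto)
    moreover have "card {Id_on X, a\<inverse>} = 2" using a'I by simp
    ultimately show ?thesis using cG2 by simp
  qed
  define D where "D = \<delta>\<^sub>1^3 * (real k)^2 / (2 * \<delta>'\<^sub>1)"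
  have sumL: "real (card G') * D \<le> real (\<Sum>v\<in>G'. \<Sum>\<beta>\<in>Large v. m v \<beta>)"
  proof -
    have "real (card G') * D = (\<Sum>v\<in>G'. D)" by simp
    also have "\<dots> \<le> (\<Sum>v\<in>G'. real (\<Sum>\<beta>\<in>Large v. m v \<beta>))"
      by (rule sum_mono) (use large in \<open>simp add: D_def\<close>)
    finally show ?thesis by simp
  qed
  have napos: "na \<ge> 2"
  proof -
    have "\<delta>\<^sub>1 ^ 2 / \<delta>'\<^sub>1 \<le> \<delta>\<^sub>1" using dd d1 d1' by (simp add: divide_simps power2_eq_square)
    then have "(\<delta>\<^sub>1 ^ 2 / \<delta>'\<^sub>1) * real k \<le> \<delta>\<^sub>1 * real k" using kpos by (intro mult_right_mono) auto
    then have "real l < real na" using l_lt vala na_val by linarith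
    then show ?thesis using l_gt by linarith
  qed
  have ODpos: "real (card OD) > 0" using cardOD napos by simp
  have ODle: "real (card OD) \<le> (real na)^2"
  proof -
    have "card OD \<le> na * na" using cardOD by (simp add: mult_le_mono)
    then have "real (card OD) \<le> real (na * na)" by (simp only: of_nat_le_iff)
    then show ?thesis by (simp add: power2_eq_square)
  qed
  have L1: "real (l - 1) = real l - 1" using l_gt by simp
  have cG'': "(real l - 1) * real (card G') \<ge> 2 * (\<delta>'\<^sub>1 / \<delta>\<^sub>1) ^ 3 * \<delta>'\<^sub>2 * real c"
  proof -
    have "2 * (\<delta>'\<^sub>1 / \<delta>\<^sub>1) ^ 3 * \<delta>'\<^sub>2 * (real c / (real l - 1)) \<le> real (card G')"
      using cardG cardG' by linarith
    then have "(real l - 1) * (2 * (\<delta>'\<^sub>1 / \<delta>\<^sub>1) ^ 3 * \<delta>'\<^sub>2 * (real c / (real l - 1))) \<le> (real l - 1) * real (card G')"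
      using lr by (intro mult_left_mono) auto
    moreover have "(real l - 1) * (real c / (real l - 1)) = real c" using lr by simp
    moreover have "(real l - 1) * (2 * (\<delta>'\<^sub>1 / \<delta>\<^sub>1) ^ 3 * \<delta>'\<^sub>2 * (real c / (real l - 1)))
       = 2 * (\<delta>'\<^sub>1 / \<delta>\<^sub>1) ^ 3 * \<delta>'\<^sub>2 * ((real l - 1) * (real c / (real l - 1)))"
      by (metis mult.left_commute)
    ultimately show ?thesis by (simp add: mult.assoc)
  qed
  have key: "(real l - 1) * real (card G') * D + real (card OD) \<le> real (card OD) * (\<delta>'\<^sub>2 * real c)"
  proof -
    have "(real l - 1) * real (card G') * D \<le> (real l - 1) * real (\<Sum>v\<in>G'. \<Sum>\<beta>\<in>Large v. m v \<beta>)"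
      using sumL lr by (simp add: mult.assoc mult_left_mono)
    also have "\<dots> \<le> real (\<Sum>v\<in>G'. \<Sum>\<beta>\<in>Large v. m v \<beta> * (m v \<beta> - 1))"
    proof -
      have "real ((l - 1) * (\<Sum>v\<in>G'. \<Sum>\<beta>\<in>Large v. m v \<beta>)) \<le> real (\<Sum>v\<in>G'. \<Sum>\<beta>\<in>Large v. m v \<beta> * (m v \<beta> - 1))"
        using Q by (simp only: of_nat_le_iff)
      then show ?thesis unfolding of_nat_mult L1 .
    qed
    finally have k1: "(real l - 1) * real (card G') * D \<le> real (\<Sum>v\<in>G'. \<Sum>\<beta>\<in>Large v. m v \<beta> * (m v \<beta> - 1))" .
    have "real (card OD + (\<Sum>v\<in>G'. \<Sum>\<beta>\<in>Large v. m v \<beta> * (m v \<beta> - 1))) \<le> real (card T)"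
      using lower by (simp only: of_nat_le_iff)
    then have k2: "real (card OD) + real (\<Sum>v\<in>G'. \<Sum>\<beta>\<in>Large v. m v \<beta> * (m v \<beta> - 1)) \<le> real (card T)"
      unfolding of_nat_add .
    show ?thesis using k1 k2 upper by linarith
  qed
  have ODr: "real (card OD) \<le> (real na)^2" using ODle .
  show False
    apply (rule final_arith[where Lm="real l - 1" and D=D and N="real (card G')" and p="\<delta>\<^sub>1"
           and k="real k" and q="\<delta>'\<^sub>1" and r="\<delta>'\<^sub>2" and c="real c" and OD="real (card OD)" and na="real na"])
    using lr cG'' key ODpos ODr vala na_val d1 d1' d2' kpos by (simp_all add: D_def)
qed

end
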